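(* Let $n\ge2$, $0\le m\le n(n-1)$ and $\nu=\lfloor \frac{m}{n}\rfloor$. Then $\mathbb G(n,m)$ is almost regular, with $n(\nu+1)-m$ vertices of in-degree $\nu$ and $m-n\nu$ vertices of in-degree $\nu+1$; more precisely, writing $d_i$ for the in-degree of vertex $i$, $(d_1,\dots,d_n)=(\nu,\dots,\nu,\nu+1,\dots,\nu+1)$, where $\nu$ appears $n(\nu+1)-m$ times followed by $\nu+1$ appearing $m-n\nu$ times.
   Context: For integers $n\ge2$ and $0\le m\le n(n-1)$, $\mathbb G(n,m)$ is the simple directed graph on vertex set $\{1,\dots,n\}$ whose arc set is $\{(\lceil \frac{i}{n-1}\rceil,\ n-((i-1)\bmod n)) : i=1,\dots,m\}$, where an arc $(j,k)$ goes from $j$ to $k$ and $a\bmod b\in\{0,\dots,b-1\}$; these $m$ pairs are pairwise distinct pairs of distinct vertices. A directed graph is almost regular if the difference between its largest and smallest in-degree is at most $1$. *)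

theory Defs
  imports Complex_Main
begin

text \<open>A digraph on vertex set {1..n} is given by its arc set (pairs (j,k) = arc from j to k).\<close>

definition GG_arcs :: "nat \<Rightarrow> nat \<Rightarrow> (nat \<times> nat) set" where
  "GG_arcs n m = {(nat \<lceil>real i / real (n - 1)\<rceil>, n - ((i - 1) mod n)) | i. i \<in> {1..m}}"

definition in_degree :: "(nat \<times> nat) set \<Rightarrow> nat \<Rightarrow> nat" where
  "in_degree A v = card {u. (u, v) \<in> A}"

definition almost_regular :: "nat set \<Rightarrow> (nat \<times> nat) set \<Rightarrow> bool" where
  "almost_regular V A \<longleftrightarrow>
     int (Max (in_degree A ` V)) - int (Min (in_degree A ` V)) \<le> 1"

end

theory Submission
  imports Defs
begin

lemma count_res:
  fixes n m c :: nat assumes "n > 0" "c < n"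
  shows "card {j. j < m \<and> j mod n = c} = m div n + (if c < m mod n then 1 else 0)"
proof -
  let ?K = "m div n + (if c < m mod n then 1 else 0)"
  have "{j. j < m \<and> j mod n = c} = (\<lambda>k. k*n + c) ` {..<?K}"
  proof (intro set_eqI iffI)
    fix j assume j: "j \<in> {j. j < m \<and> j mod n = c}"
    have e0: "j = (j div n)*n + j mod n" by simp
    have e: "j = (j div n)*n + c" using j e0 by simp
    have jm: "j < m" using j by simp
    have m: "m = (m div n)*n + m mod n" by simp
    have "j div n < ?K"
    proof (rule ccontr)
      assume "\<not> j div n < ?K"
      then have "j div n \<ge> ?K" by simp
      show False
      proof (cases "c < m mod n")
        case True
        then have "j div n \<ge> m div n + 1" using \<open>j div n \<ge> ?K\<close> by simp
        hence "j div n * n \<ge> (m div n + 1) * n" by (rule mult_le_mono1)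
        moreover have "m mod n < n" using assms by simp
        moreover have "(m div n + 1)*n = (m div n)*n + n" by simp
        ultimately show False using jm e m by linarith
      next
        case False
        then have "j div n \<ge> m div n" using \<open>j div n \<ge> ?K\<close> by simp
        hence "j div n * n \<ge> (m div n) * n" by (rule mult_le_mono1)
        then show False using jm e m False by linarith
      qed
    qed
    thus "j \<in> (\<lambda>k. k*n + c) ` {..<?K}" using e by blast
  next
    fix j assume "j \<in> (\<lambda>k. k*n + c) ` {..<?K}"
    then obtain k where k: "k < ?K" "j = k*n+c" by blast
    have m: "m = (m div n)*n + m mod n" by simp
    show "j \<in> {j. j < m \<and> j mod n = c}"
    proof -
      have "j < m"
      proof (cases "k < m div n")
        case True
        hence "k*n + n \<le> (m div n)*n" by (metis Suc_leI mult_Suc mult_le_mono1 add.commute)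
        then show ?thesis using k assms m by linarith
      next
        case False
        then have "k = m div n" "c < m mod n" using k by (auto split: if_splits)
        then have "j = (m div n)*n + c" using k by simp
        then show ?thesis using \<open>c < m mod n\<close> m by linarith
      qed
      moreover have "j mod n = c" using k assms by simp
      ultimately show ?thesis by simp
    qed
  qed
  moreover have "inj_on (\<lambda>k. k*n + c) {..<?K}" using assms by (auto simp: inj_on_def)
  ultimately show ?thesis by (simp add: card_image)
qed


lemma f_mono:
  fixes n i i' :: nat assumes "n \<ge> 2" "1 \<le> i" "i < i'" "(i-1) mod n = (i'-1) mod n"
  shows "nat \<lceil>real i / real (n - 1)\<rceil> < nat \<lceil>real i' / real (n - 1)\<rceil>"
proof -
  have "n dvd (i'-1) - (i-1)" using assms(3,4) by (metis mod_eq_dvd_iff_nat diff_le_mono less_imp_le)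
  moreover have "(i'-1) - (i-1) > 0" using assms by simp
  ultimately have "(i'-1) - (i-1) \<ge> n" by (simp add: dvd_imp_le)
  hence ii: "i' \<ge> i + n" using assms by simp
  have np: "real (n-1) > 0" using assms by simp
  have "real i' / real (n-1) \<ge> (real i + real (n-1)) / real (n-1)"
    using ii np by (intro divide_right_mono) auto
  also have "(real i + real (n-1)) / real (n-1) = real i / real (n-1) + 1" using np by (simp add: field_simps)
  finally have le: "real i / real (n-1) + 1 \<le> real i' / real (n-1)" .
  have "\<lceil>real i / real (n-1)\<rceil> + 1 \<le> \<lceil>real i' / real (n-1)\<rceil>"
    using ceiling_mono[OF le] by simp
  moreover have "\<lceil>real i / real (n-1)\<rceil> \<ge> 0"
  proof -
    have "0 \<le> real i / real (n-1)" by simp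
    then show ?thesis by (metis ceiling_zero ceiling_mono)
  qed
  ultimately show ?thesis by linarith
qed

lemma indeg:
  fixes n m v :: nat assumes "n \<ge> 2" "v \<in> {1..n}"
  shows "in_degree (GG_arcs n m) v = card {j. j < m \<and> j mod n = n - v}"
proof -
  define f where "f i = nat \<lceil>real i / real (n - 1)\<rceil>" for i :: nat
  define S where "S = {i \<in> {1..m}. n - ((i-1) mod n) = v}"
  have A: "{u. (u, v) \<in> GG_arcs n m} = f ` S"
    unfolding GG_arcs_def S_def f_def by auto
  have inj: "inj_on f S"
  proof (rule linorder_inj_onI')
    fix i i' assume "i \<in> S" "i' \<in> S" "i < i'"
    moreover have "(i-1) mod n < n" "(i'-1) mod n < n" using assms by auto
    ultimately have eq: "(i-1) mod n = (i'-1) mod n" and i1: "1 \<le> i" unfolding S_def by auto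
    have "f i < f i'" using f_mono[OF assms(1) i1 \<open>i < i'\<close> eq] unfolding f_def .
    then show "f i \<noteq> f i'" by simp
  qed
  have S2: "S = Suc ` {j. j < m \<and> j mod n = n - v}"
  proof (intro set_eqI iffI)
    fix i assume "i \<in> S"
    moreover have "(i-1) mod n < n" using assms by auto
    ultimately have "i - 1 < m" "(i-1) mod n = n - v" "i = Suc (i-1)" unfolding S_def using assms by auto
    then show "i \<in> Suc ` {j. j < m \<and> j mod n = n - v}" by blast
  next
    fix i assume "i \<in> Suc ` {j. j < m \<and> j mod n = n - v}"
    then show "i \<in> S" unfolding S_def using assms by auto
  qed
  have "card (f ` S) = card S" by (rule card_image[OF inj])
  also have "card S = card {j. j < m \<and> j mod n = n - v}" unfolding S2 by (simp add: card_image)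
  finally show ?thesis unfolding in_degree_def A .
qed

theorem proposition2:
  fixes n m :: nat
  assumes "n \<ge> 2" and "m \<le> n * (n - 1)"
  defines "\<nu> \<equiv> m div n"
  shows "almost_regular {1..n} (GG_arcs n m)
    \<and> card {v \<in> {1..n}. in_degree (GG_arcs n m) v = \<nu>} = n * (\<nu> + 1) - m
    \<and> card {v \<in> {1..n}. in_degree (GG_arcs n m) v = \<nu> + 1} = m - n * \<nu>
    \<and> (\<forall>i \<in> {1..n}. in_degree (GG_arcs n m) i =
          (if i \<le> n * (\<nu> + 1) - m then \<nu> else \<nu> + 1))"
proof -
  define r where "r = m mod n"
  have mr: "m = n * \<nu> + r" unfolding r_def \<nu>_def by simp
  have rn: "r < n" using assms(1) unfolding r_def by simp
  have e1: "n * (\<nu> + 1) - m = n - r" using mr by (simp add: algebra_simps)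
  have e2: "m - n * \<nu> = r" using mr by simp
  have deg: "in_degree (GG_arcs n m) v = (if v \<le> n - r then \<nu> else \<nu> + 1)" if v: "v \<in> {1..n}" for v
  proof -
    have "in_degree (GG_arcs n m) v = \<nu> + (if n - v < r then 1 else 0)"
      using indeg[OF assms(1) v] count_res[of n "n - v" m] assms(1) v unfolding \<nu>_def r_def by auto
    then show ?thesis using v by auto
  qed
  have P4: "\<forall>i \<in> {1..n}. in_degree (GG_arcs n m) i =
          (if i \<le> n * (\<nu> + 1) - m then \<nu> else \<nu> + 1)" using deg e1 by simp
  have da: "in_degree (GG_arcs n m) v = \<nu>" if "v \<in> {1..n}" "v \<le> n - r" for v
    using deg[OF that(1)] that(2) by simp
  have db: "in_degree (GG_arcs n m) v = \<nu> + 1" if "v \<in> {1..n}" "\<not> v \<le> n - r" for v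
    using deg[OF that(1)] that(2) by simp
  have s1: "{v \<in> {1..n}. in_degree (GG_arcs n m) v = \<nu>} = {1..n-r}"
  proof (intro set_eqI)
    fix v show "v \<in> {v \<in> {1..n}. in_degree (GG_arcs n m) v = \<nu>} \<longleftrightarrow> v \<in> {1..n-r}"
      using da[of v] db[of v] rn by (cases "v \<le> n - r") auto
  qed
  have s2: "{v \<in> {1..n}. in_degree (GG_arcs n m) v = \<nu> + 1} = {n-r+1..n}"
  proof (intro set_eqI)
    fix v show "v \<in> {v \<in> {1..n}. in_degree (GG_arcs n m) v = \<nu> + 1} \<longleftrightarrow> v \<in> {n-r+1..n}"
      using da[of v] db[of v] rn by (cases "v \<le> n - r") auto
  qed
  have img: "in_degree (GG_arcs n m) ` {1..n} \<subseteq> {\<nu>, \<nu>+1}" using deg by auto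
  have ne: "in_degree (GG_arcs n m) ` {1..n} \<noteq> {}" using assms(1) by auto
  have "Max (in_degree (GG_arcs n m) ` {1..n}) \<le> \<nu> + 1"
    using img ne by (subst Max_le_iff) auto
  moreover have "Min (in_degree (GG_arcs n m) ` {1..n}) \<ge> \<nu>"
    using img ne by (subst Min_ge_iff) auto
  ultimately have "almost_regular {1..n} (GG_arcs n m)" unfolding almost_regular_def by linarith
  then show ?thesis using P4 s1 s2 e1 e2 rn by simp
qed

end
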